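(* Consider the atomic model under the Shapley scheme with one large player of stake $a$ and all other players of stake $1$, and a $(k,l)$-partition with $k<h$. If $k\le h-2$, the partition is a Nash equilibrium provided that (1) $\frac{k(k+1)}{h-a}\le l\le\frac{(k+1)(k+2)}{h-a}$ and (2) $l\ge\frac{a(k+1)}{k-h+a+1}$. If $k=h-1$, the same conclusion holds with the upper bound in (1) replaced by $l\le\frac{(k+1)(k+2)}{h+1-a}=\frac{h(h+1)}{h+1-a}$.
   Context: Atomic model with threshold $h$: one player has stake $a$ (the large player) and all others stake $1$ (small players), where $h,a$ are integers with $2\le a\le h-1$. Pools partition the players; a pool $S$ has reward $\rho(S)=1$ if its total stake is at least $h$ and $0$ otherwise. Shapley scheme: player $i$ in pool $S$ receives $\phi_i(S)=\sum_{T\subseteq S\setminus\{i\}}\frac{|T|!(|S|-|T|-1)!}{|S|!}(\rho(T\cup\{i\})-\rho(T))$. A partition into winning pools is a Nash equilibrium if no player can strictly increase her payment by moving to another pool of the partition or opening a new pool alone. For integers $k,l$ with $k+a\ge h$ and $l\ge h+1$, a $(k,l)$-partition is a partition consisting only of pools of the following types (not necessarily all present): Type A: exactly one large player and $k$ small players; Type B: $l$ small players; Type C: $l-1$ small players. *)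

theory Defs
  imports Complex_Main "HOL-Library.Disjoint_Sets"
begin

definition stake :: "'p \<Rightarrow> nat \<Rightarrow> 'p \<Rightarrow> nat" where
  "stake L a i = (if i = L then a else 1)"

definition rho :: "nat \<Rightarrow> 'p \<Rightarrow> nat \<Rightarrow> 'p set \<Rightarrow> real" where
  "rho h L a S = (if h \<le> (\<Sum>i\<in>S. stake L a i) then 1 else 0)"

definition shapley :: "nat \<Rightarrow> 'p \<Rightarrow> nat \<Rightarrow> 'p set \<Rightarrow> 'p \<Rightarrow> real" where
  "shapley h L a S i =
     (\<Sum>T\<in>Pow (S - {i}).
        (fact (card T) * fact (card S - card T - 1) / fact (card S))
        * (rho h L a (T \<union> {i}) - rho h L a T))"

definition nash_eq :: "nat \<Rightarrow> 'p \<Rightarrow> nat \<Rightarrow> 'p set \<Rightarrow> 'p set set \<Rightarrow> bool" where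
  "nash_eq h L a N P \<longleftrightarrow>
     partition_on N P \<and> (\<forall>S\<in>P. rho h L a S = 1) \<and>
     (\<forall>S\<in>P. \<forall>i\<in>S.
        (\<forall>S'\<in>P. S' \<noteq> S \<longrightarrow> shapley h L a (insert i S') i \<le> shapley h L a S i) \<and>
        shapley h L a {i} i \<le> shapley h L a S i)"

definition kl_partition :: "'p \<Rightarrow> nat \<Rightarrow> nat \<Rightarrow> 'p set \<Rightarrow> 'p set set \<Rightarrow> bool" where
  "kl_partition L k l N P \<longleftrightarrow>
     partition_on N P \<and>
     (\<forall>S\<in>P. (L \<in> S \<and> card S = k + 1) \<or> (L \<notin> S \<and> card S = l) \<or> (L \<notin> S \<and> card S = l - 1))"

end

theory Submission
  imports Defs
begin

lemma sum_pow_card: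
  fixes f :: "nat \<Rightarrow> real"
  assumes "finite U"
  shows "(\<Sum>T\<in>Pow U. f (card T)) = (\<Sum>t\<le>card U. real (card U choose t) * f t)"
proof -
  have "(\<Sum>T\<in>Pow U. f (card T)) = (\<Sum>t\<le>card U. \<Sum>T\<in>{T. T\<in>Pow U \<and> card T = t}. f (card T))"
    by (rule sum.group[symmetric]) (auto simp: assms card_mono)
  also have "\<dots> = (\<Sum>t\<le>card U. real (card U choose t) * f t)"
  proof (rule sum.cong[OF refl])
    fix t assume "t \<in> {..card U}"
    have "(\<Sum>T\<in>{T. T\<in>Pow U \<and> card T = t}. f (card T)) = (\<Sum>T\<in>{T. T\<in>Pow U \<and> card T = t}. f t)" by simp
    also have "\<dots> = real (card {T. T\<in>Pow U \<and> card T = t}) * f t" by simp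
    also have "card {T. T\<in>Pow U \<and> card T = t} = card U choose t" using n_subsets[OF assms, of t] by simp
    finally show "(\<Sum>T\<in>{T. T\<in>Pow U \<and> card T = t}. f (card T)) = real (card U choose t) * f t" .
  qed
  finally show ?thesis .
qed

lemma coef1:
  assumes "t \<le> m"
  shows "real (m choose t) * (fact t * fact (Suc m - t - 1) / fact (Suc m)) = 1 / real (Suc m)"
proof -
  have "Suc m - t - 1 = m - t" by simp
  moreover have "(fact (Suc m) :: real) = real (Suc m) * fact m" by simp
  moreover have "(fact t :: real) > 0" "(fact (m-t) :: real) > 0" "(fact m :: real) > 0" by auto
  moreover have "(fact m :: real) * (1 + real m) > 0" by (simp add: add_pos_nonneg)
  ultimately show ?thesis using binomial_fact[OF assms, where 'a=real]
    by (simp add: field_simps)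
qed

lemma aux_frac:
  fixes x y z p q j1 :: real
  assumes "x \<noteq> 0" "y \<noteq> 0" "z \<noteq> 0" "p \<noteq> 0" "q \<noteq> 0"
  shows "x / (y * z) * (j1 * y * z / (p * q * x)) = j1 / (q * p)"
  using assms by (simp add: field_simps)

lemma coef2:
  assumes "j \<le> n"
  shows "real (n choose j) * (fact (Suc j) * fact (Suc (Suc n) - Suc j - 1) / fact (Suc (Suc n)))
         = real (Suc j) / (real (Suc n) * real (Suc (Suc n)))"
proof -
  have e1: "Suc (Suc n) - Suc j - 1 = n - j" by simp
  have e2: "(fact (Suc (Suc n)) :: real) = real (Suc (Suc n)) * real (Suc n) * fact n" by simp
  have e3: "(fact (Suc j) :: real) = real (Suc j) * fact j" by simp
  have "real (n choose j) * (fact (Suc j) * fact (Suc (Suc n) - Suc j - 1) / fact (Suc (Suc n)))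
     = fact n / (fact j * fact (n - j)) * (real (Suc j) * fact j * fact (n - j) / (real (Suc (Suc n)) * real (Suc n) * fact n))"
    unfolding e1 e2 e3 binomial_fact[OF assms, where 'a=real] by simp
  also have "\<dots> = real (Suc j) / (real (Suc n) * real (Suc (Suc n)))"
    by (rule aux_frac) auto
  finally show ?thesis .
qed

lemma coef3:
  shows "real (n choose n) * (fact n * fact (Suc (Suc n) - n - 1) / fact (Suc (Suc n)))
         = 1 / (real (Suc n) * real (Suc (Suc n)))"
proof -
  have e1: "Suc (Suc n) - n - 1 = 1" by simp
  have e2: "(fact (Suc (Suc n)) :: real) = real (Suc (Suc n)) * real (Suc n) * fact n" by simp
  have "real (n choose n) * (fact n * fact (Suc (Suc n) - n - 1) / fact (Suc (Suc n)))
     = fact n * 1 / (real (Suc (Suc n)) * real (Suc n) * fact n)"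
    unfolding e1 e2 by simp
  also have "\<dots> = 1 / (real (Suc n) * real (Suc (Suc n)))"
    by simp
  finally show ?thesis .
qed

lemma stake_noL: "finite T \<Longrightarrow> L \<notin> T \<Longrightarrow> (\<Sum>i\<in>T. stake L a i) = card T"
proof -
  assume "finite T" "L \<notin> T"
  then have "(\<Sum>i\<in>T. stake L a i) = (\<Sum>i\<in>T. 1)" by (intro sum.cong) (auto simp: stake_def)
  then show ?thesis by simp
qed

lemma stake_L: "finite T \<Longrightarrow> L \<in> T \<Longrightarrow> (\<Sum>i\<in>T. stake L a i) = a + card (T - {L})"
proof -
  assume "finite T" "L \<in> T"
  then have "(\<Sum>i\<in>T. stake L a i) = stake L a L + (\<Sum>i\<in>T-{L}. stake L a i)"
    by (simp add: sum.remove)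
  then show ?thesis using \<open>finite T\<close> by (simp add: stake_noL stake_def[of L a L])
qed

lemma rho_noL: "finite T \<Longrightarrow> L \<notin> T \<Longrightarrow> rho h L a T = (if h \<le> card T then 1 else 0)"
  by (simp add: rho_def stake_noL)

lemma rho_L: "finite T \<Longrightarrow> L \<in> T \<Longrightarrow> rho h L a T = (if h \<le> a + card (T - {L}) then 1 else 0)"
  by (simp add: rho_def stake_L)

lemma shap_generic:
  assumes "finite S" "i \<in> S"
    and "\<And>T. T \<subseteq> S - {i} \<Longrightarrow> rho h L a (T \<union> {i}) - rho h L a T = (if Q (card T) then 1 else 0)"
  shows "shapley h L a S i = real (card {t\<in>{..card S - 1}. Q t}) / real (card S)"
proof -
  let ?U = "S - {i}"
  define m where "m = card ?U"
  have cS: "card S = Suc m" using assms card_Suc_Diff1 m_def by metis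
  have fU: "finite ?U" using assms by simp
  define f where "f t = fact t * fact (Suc m - t - 1) / fact (Suc m) * (if Q t then 1 else 0 :: real)" for t
  have "shapley h L a S i = (\<Sum>T\<in>Pow ?U. f (card T))"
    unfolding shapley_def
  proof (rule sum.cong[OF refl])
    fix T assume "T \<in> Pow ?U"
    then show "fact (card T) * fact (card S - card T - 1) / fact (card S) *
          (rho h L a (T \<union> {i}) - rho h L a T) = f (card T)"
      using assms(3)[of T] cS by (simp add: f_def)
  qed
  also have "\<dots> = (\<Sum>t\<le>m. real (m choose t) * f t)" using sum_pow_card[OF fU] m_def by simp
  also have "\<dots> = (\<Sum>t\<le>m. if Q t then 1 / real (Suc m) else 0)"
  proof (rule sum.cong[OF refl])
    fix t assume "t \<in> {..m}"
    then have t: "t \<le> m" by simp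
    show "real (m choose t) * f t = (if Q t then 1 / real (Suc m) else 0)"
      unfolding f_def by (subst mult.assoc[symmetric], subst coef1[OF t]) simp
  qed
  also have "\<dots> = real (card {t\<in>{..m}. Q t}) / real (Suc m)"
    by (simp add: sum.If_cases Int_def conj_commute)
  finally show ?thesis using cS by simp
qed

lemma shap_L:
  assumes "finite S" "L \<in> S"
  shows "shapley h L a S L = real (card {t\<in>{..card S - 1}. h \<le> t + a \<and> t < h}) / real (card S)"
proof (rule shap_generic[OF assms])
  fix T assume T: "T \<subseteq> S - {L}"
  then have fT: "finite T" "L \<notin> T" using assms finite_subset by auto
  then have "(T \<union> {L}) - {L} = T" by auto
  then show "rho h L a (T \<union> {L}) - rho h L a T = (if h \<le> card T + a \<and> card T < h then 1 else 0)"
    using fT by (simp add: rho_noL rho_L add.commute)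
qed

lemma shap_small_noL:
  assumes "finite S" "L \<notin> S" "i \<in> S" "1 \<le> h"
  shows "shapley h L a S i = (if h \<le> card S then 1 / real (card S) else 0)"
proof -
  have "shapley h L a S i = real (card {t\<in>{..card S - 1}. Suc t = h}) / real (card S)"
  proof (rule shap_generic[OF assms(1,3)])
    fix T assume T: "T \<subseteq> S - {i}"
    then have fT: "finite T" "L \<notin> T" "i \<notin> T" "L \<noteq> i" using assms finite_subset by auto
    then show "rho h L a (T \<union> {i}) - rho h L a T = (if Suc (card T) = h then 1 else 0)"
      using assms by (auto simp add: rho_noL)
  qed
  moreover have "card S > 0" using assms card_gt_0_iff by blast
  moreover have "{t\<in>{..card S - 1}. Suc t = h} = (if h \<le> card S then {h - 1} else {})"
    using assms calculation(2) by auto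
  ultimately show ?thesis by simp
qed

lemma shap_small_L:
  assumes fS: "finite S" and LS: "L \<in> S" and iS: "i \<in> S" and iL: "i \<noteq> L"
    and cS: "card S = Suc (Suc n)" and ah: "a < h" and h1: "h \<le> Suc n + a" and h2: "Suc n \<le> h"
  shows "shapley h L a S i = (real (h - a) + (if Suc n = h then 1 else 0)) / (real (Suc n) * real (Suc (Suc n)))"
proof -
  define V where "V = S - {i} - {L}"
  have U: "S - {i} = insert L V" using LS iL V_def by auto
  have LV: "L \<notin> V" "i \<notin> V" and fV: "finite V" using fS V_def by auto
  have cV: "card V = n" using cS fS LS iS iL V_def by (simp add: card_Diff_subset)
  define c where "c s = (fact s * fact (card S - s - 1) / fact (card S) :: real)" for s
  define g1 where "g1 t = c t * (if Suc t = h then 1 else 0)" for t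
  define g2 where "g2 t = c (Suc t) * (if Suc t + a = h then 1 else 0)" for t
  define F where "F T = c (card T) * (rho h L a (T \<union> {i}) - rho h L a T)" for T
  have "shapley h L a S i = (\<Sum>T\<in>Pow (insert L V). F T)"
    unfolding shapley_def F_def c_def U ..
  also have "\<dots> = (\<Sum>T\<in>Pow V. F T) + (\<Sum>T\<in>insert L ` Pow V. F T)"
    unfolding Pow_insert using fV LV by (intro sum.union_disjoint) auto
  also have "(\<Sum>T\<in>insert L ` Pow V. F T) = (\<Sum>T\<in>Pow V. F (insert L T))"
  proof (rule sum.reindex_cong[OF _ refl refl])
    show "inj_on (insert L) (Pow V)" unfolding inj_on_def using LV by (metis Pow_iff insert_ident subset_iff)
  qed
  also have "(\<Sum>T\<in>Pow V. F T) = (\<Sum>T\<in>Pow V. g1 (card T))"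
  proof (rule sum.cong[OF refl])
    fix T assume "T \<in> Pow V"
    then have T: "finite T" "L \<notin> T" "i \<notin> T" using LV fV finite_subset by auto
    then show "F T = g1 (card T)" using iL unfolding F_def g1_def by (auto simp: rho_noL)
  qed
  also have "(\<Sum>T\<in>Pow V. F (insert L T)) = (\<Sum>T\<in>Pow V. g2 (card T))"
  proof (rule sum.cong[OF refl])
    fix T assume "T \<in> Pow V"
    then have T: "finite T" "L \<notin> T" "i \<notin> T" using LV fV finite_subset by auto
    then have e1: "insert L T - {L} = T" "insert L (insert i T) - {L} = insert i T" using iL by auto
    have "rho h L a (insert L T \<union> {i}) - rho h L a (insert L T) = (if Suc (card T) + a = h then 1 else 0)"
      using T e1 iL by (simp add: rho_L card_insert_if)
    then show "F (insert L T) = g2 (card T)" using T unfolding F_def g2_def by simp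
  qed
  also have "(\<Sum>T\<in>Pow V. g1 (card T)) = (\<Sum>t\<le>n. real (n choose t) * g1 t)"
    using sum_pow_card[OF fV] cV by simp
  also have "\<dots> = (\<Sum>t\<le>n. if t = h - 1 then real (n choose t) * c t else 0)"
    using ah by (intro sum.cong) (auto simp: g1_def)
  also have "\<dots> = (if Suc n = h then 1 / (real (Suc n) * real (Suc (Suc n))) else 0)"
  proof (cases "Suc n = h")
    case True
    then have "h - 1 = n" by simp
    then show ?thesis using True coef3[of n] cS by (simp add: c_def)
  next
    case False
    then have "\<not> h - 1 \<le> n" using h2 by simp
    then show ?thesis using False by simp
  qed
  also have "(\<Sum>T\<in>Pow V. g2 (card T)) = (\<Sum>t\<le>n. real (n choose t) * g2 t)"
    using sum_pow_card[OF fV] cV by simp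
  also have "\<dots> = (\<Sum>t\<le>n. if t = h - a - 1 then real (n choose t) * c (Suc t) else 0)"
    using ah by (intro sum.cong) (auto simp: g2_def)
  also have "\<dots> = real (n choose (h - a - 1)) * c (Suc (h - a - 1))"
  proof -
    have "h - a - 1 \<in> {..n}" using h1 by simp
    then show ?thesis by (simp only: sum.delta finite_atMost if_True)
  qed
  also have "\<dots> = real (h - a) / (real (Suc n) * real (Suc (Suc n)))"
  proof -
    have j: "h - a - 1 \<le> n" using h1 by simp
    have s: "Suc (h - a - 1) = h - a" using ah by simp
    show ?thesis using coef2[OF j] cS unfolding c_def s by simp
  qed
  finally have "shapley h L a S i = (if Suc n = h then 1 / (real (Suc n) * real (Suc (Suc n))) else 0)
     + real (h - a) / (real (Suc n) * real (Suc (Suc n)))" (is "_ = ?R") .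
  moreover have "?R = (real (h - a) + (if Suc n = h then 1 else 0)) / (real (Suc n) * real (Suc (Suc n)))"
    by (cases "Suc n = h") (simp_all only: if_True if_False add_divide_distrib add.commute, simp_all)
  ultimately show ?thesis by simp
qed

lemma cntA:
  assumes "k < h" "h \<le> k + a" "a < h"
  shows "card {t\<in>{..k}. h \<le> t + a \<and> t < h} = k + 1 + a - h"
proof -
  have "{t\<in>{..k}. h \<le> t + a \<and> t < h} = {h - a..k}" using assms by auto
  then have "card {t\<in>{..k}. h \<le> t + a \<and> t < h} = Suc k - (h - a)" by simp
  moreover have "Suc k - (h - a) = k + 1 + a - h" using assms by linarith
  ultimately show ?thesis by simp
qed

lemma cntB:
  assumes "h \<le> Suc m" "a < h"
  shows "card {t\<in>{..m}. h \<le> t + a \<and> t < h} = a"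
proof -
  have "{t\<in>{..m}. h \<le> t + a \<and> t < h} = {h - a..<h}" using assms by auto
  then show ?thesis using assms by simp
qed

lemma frac_le:
  fixes p q r s :: real
  assumes "0 < q" "0 < s" "p * s \<le> r * q"
  shows "p / q \<le> r / s"
proof -
  have "p / q = (p * s) / (q * s)" using assms by simp
  also have "\<dots> \<le> (r * q) / (q * s)" using assms by (intro divide_right_mono) auto
  also have "\<dots> = r / s" using assms by simp
  finally show ?thesis .
qed

theorem lemma3p9:
  fixes N :: "'p set" and L :: 'p and h a k l :: nat and P :: "'p set set"
  assumes "finite N" and "L \<in> N"
    and "2 \<le> a" and "a \<le> h - 1"
    and "h \<le> k + a" and "h + 1 \<le> l" and "k < h"
    and "kl_partition L k l N P"
    and "(k \<le> h - 2 \<and>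
          real k * (real k + 1) / (real h - real a) \<le> real l \<and>
          real l \<le> (real k + 1) * (real k + 2) / (real h - real a) \<and>
          real a * (real k + 1) / (real k - real h + real a + 1) \<le> real l)
       \<or> (k = h - 1 \<and>
          real k * (real k + 1) / (real h - real a) \<le> real l \<and>
          real l \<le> (real k + 1) * (real k + 2) / (real h + 1 - real a) \<and>
          real a * (real k + 1) / (real k - real h + real a + 1) \<le> real l)"
  shows "nash_eq h L a N P"
proof -
  have part: "partition_on N P" and types: "\<And>S. S \<in> P \<Longrightarrow> (L \<in> S \<and> card S = k + 1) \<or> (L \<notin> S \<and> card S = l) \<or> (L \<notin> S \<and> card S = l - 1)"
    using assms(8) unfolding kl_partition_def by auto
  have fin: "\<And>S. S \<in> P \<Longrightarrow> finite S"
    using part assms(1) unfolding partition_on_def by (meson Union_upper finite_subset)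
  have disj: "\<And>S S' x. S \<in> P \<Longrightarrow> S' \<in> P \<Longrightarrow> x \<in> S \<Longrightarrow> x \<in> S' \<Longrightarrow> S = S'"
    using part unfolding partition_on_def disjoint_def by blast
  have ah: "a < h" and h3: "3 \<le> h" using assms(3,4) by auto
  have k1: "1 \<le> k" using assms(5) ah by linarith
  have hl: "h \<le> l - 1" using assms(6) by simp
  have pos1: "real k - real h + real a + 1 > 0" using assms(5) by linarith
  have pos2: "real h - real a > 0" using ah by simp
  have R1: "real a * (real k + 1) \<le> real l * (real k - real h + real a + 1)"
    using assms(9) pos1 by (auto simp: divide_le_eq)
  have R2: "real k * (real k + 1) \<le> real l * (real h - real a)"
    using assms(9) pos2 by (auto simp: divide_le_eq)
  have R3: "real l * (real (h - a) + (if Suc k = h then 1 else 0)) \<le> (real k + 1) * (real k + 2)"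
  proof (cases "Suc k = h")
    case True
    have p: "real h + 1 - real a > 0" using ah by simp
    have e: "real (h - a) + (if Suc k = h then 1 else 0) = real h + 1 - real a" using True ah by (simp add: of_nat_diff)
    have "real l \<le> (real k + 1) * (real k + 2) / (real h + 1 - real a)" using assms(9) True k1 by auto
    then show ?thesis unfolding e using pos_le_divide_eq[OF p] by simp
  next
    case False
    have e: "real (h - a) + (if Suc k = h then 1 else 0) = real h - real a" using False ah by (simp add: of_nat_diff)
    have "real l \<le> (real k + 1) * (real k + 2) / (real h - real a)" using assms(9) False assms(7) k1 by auto
    then show ?thesis unfolding e using pos_le_divide_eq[OF pos2] by simp
  qed
  have OwnL: "shapley h L a S L = (real k + 1 + real a - real h) / (real k + 1)" if "S \<in> P" "L \<in> S" for S
  proof -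
    have c: "card S = k + 1" using types[OF that(1)] that(2) by auto
    show ?thesis using shap_L[OF fin[OF that(1)] that(2), where h=h and a=a] c cntA[OF assms(7,5) ah] assms(5)
      by (simp add: of_nat_diff add.commute add.left_commute)
  qed
  have OwnAs: "shapley h L a S i = real (h - a) / (real k * (real k + 1))" if "S \<in> P" "L \<in> S" "i \<in> S" "i \<noteq> L" for S i
  proof -
    have c: "card S = Suc (Suc (k - 1))" using types[OF that(1)] that(2) k1 by auto
    have "shapley h L a S i = (real (h - a) + (if Suc (k - 1) = h then 1 else 0)) / (real (Suc (k - 1)) * real (Suc (Suc (k - 1))))"
      by (rule shap_small_L[OF fin[OF that(1)] that(2,3,4) c ah]) (use assms(5,7) k1 in auto)
    then show ?thesis using k1 assms(7) by (simp add: of_nat_diff)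
  qed
  have OwnB: "shapley h L a S i = 1 / real (card S) \<and> l - 1 \<le> card S \<and> card S \<le> l" if "S \<in> P" "L \<notin> S" "i \<in> S" for S i
  proof -
    have c: "l - 1 \<le> card S" "card S \<le> l" using types[OF that(1)] that(2) by auto
    then show ?thesis using shap_small_noL[OF fin[OF that(1)] that(2,3), where h=h and a=a] hl h3 by simp
  qed
  have DevL: "shapley h L a (insert L S') L = real a / (real (card S') + 1)" if "S' \<in> P" "L \<notin> S'" for S'
  proof -
    have f: "finite (insert L S')" using fin[OF that(1)] by simp
    have c: "card (insert L S') = Suc (card S')" using fin[OF that(1)] that(2) by simp
    have cc: "h \<le> Suc (card S')" using types[OF that(1)] that(2) hl by auto
    show ?thesis using shap_L[OF f, where h=h and a=a] c cntB[OF cc ah] by simp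
  qed
  have DevS: "shapley h L a (insert i S') i = 1 / (real (card S') + 1) \<and> l - 1 \<le> card S'" if "S' \<in> P" "L \<notin> S'" "i \<notin> S'" "i \<noteq> L" for S' i
  proof -
    have f: "finite (insert i S')" using fin[OF that(1)] by simp
    have c: "card (insert i S') = Suc (card S')" using fin[OF that(1)] that(3) by simp
    have cc: "l - 1 \<le> card S'" using types[OF that(1)] that(2) by auto
    show ?thesis using shap_small_noL[OF f _ insertI1, where h=h and a=a and L=L] c cc hl that h3 by (simp add: add.commute)
  qed
  have DevA: "shapley h L a (insert i S') i = (real (h - a) + (if Suc k = h then 1 else 0)) / ((real k + 1) * (real k + 2))" if "S' \<in> P" "L \<in> S'" "i \<notin> S'" for S' i
  proof -
    have f: "finite (insert i S')" using fin[OF that(1)] by simp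
    have iL: "i \<noteq> L" using that by auto
    have c: "card (insert i S') = Suc (Suc k)" using fin[OF that(1)] that types[OF that(1)] by simp
    have "shapley h L a (insert i S') i = (real (h - a) + (if Suc k = h then 1 else 0)) / (real (Suc k) * real (Suc (Suc k)))"
      by (rule shap_small_L[OF f _ _ iL c ah]) (use that assms(5,7) in auto)
    then show ?thesis by (simp add: add.commute)
  qed
  have Alone: "shapley h L a {i} i = 0" for i
  proof (cases "i = L")
    case True
    have "{t\<in>{..0::nat}. h \<le> t + a \<and> t < h} = {}" using ah by auto
    then show ?thesis using True shap_L[of "{L}" L h a] by simp
  next
    case False
    then show ?thesis using shap_small_noL[of "{i}" L i h a] h3 by simp
  qed
  have rhos: "\<forall>S\<in>P. rho h L a S = 1"
  proof
    fix S assume S: "S \<in> P"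
    show "rho h L a S = 1"
    proof (cases "L \<in> S")
      case True
      then have "card (S - {L}) = k" using types[OF S] fin[OF S] by auto
      then show ?thesis using rho_L[OF fin[OF S] True] assms(5) by simp
    next
      case False
      then show ?thesis using rho_noL[OF fin[OF S] False] types[OF S] hl by auto
    qed
  qed
  have key: "(\<forall>S'\<in>P. S' \<noteq> S \<longrightarrow> shapley h L a (insert i S') i \<le> shapley h L a S i) \<and>
        shapley h L a {i} i \<le> shapley h L a S i" if S: "S \<in> P" and iS: "i \<in> S" for S i
  proof -
    have own_nn: "0 \<le> shapley h L a S i"
    proof (cases "L \<in> S")
      case True
      show ?thesis
      proof (cases "i = L")
        case True
        then show ?thesis using OwnL[OF S] \<open>L \<in> S\<close> assms(5) by auto
      next
        case False
        then show ?thesis using OwnAs[OF S \<open>L \<in> S\<close> iS False] by simp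
      qed
    next
      case False
      then show ?thesis using OwnB[OF S False iS] by simp
    qed
    have B: "shapley h L a {i} i \<le> shapley h L a S i" using Alone own_nn by simp
    have A: "\<forall>S'\<in>P. S' \<noteq> S \<longrightarrow> shapley h L a (insert i S') i \<le> shapley h L a S i"
    proof (intro ballI impI)
      fix S' assume S': "S' \<in> P" "S' \<noteq> S"
      have iS': "i \<notin> S'" using disj[OF S S'(1) iS] S'(2) by auto
      show "shapley h L a (insert i S') i \<le> shapley h L a S i"
      proof (cases "L \<in> S")
        case True
        then have LS': "L \<notin> S'" using disj[OF S S'(1)] S'(2) by auto
        show ?thesis
        proof (cases "i = L")
          case iL: True
          have c': "real l \<le> real (card S') + 1" using types[OF S'(1)] LS' by auto
          have "real l * (real k - real h + real a + 1) \<le> (real (card S') + 1) * (real k - real h + real a + 1)"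
            using c' pos1 by (intro mult_right_mono) auto
          then have m1: "real a * (real k + 1) \<le> (real (card S') + 1) * (real k - real h + real a + 1)"
            using R1 by linarith
          have "real a / (real (card S') + 1) \<le> (real k + 1 + real a - real h) / (real k + 1)"
          proof (intro frac_le)
            show "0 < real (card S') + 1" by simp
            show "0 < real k + 1" by simp
            show "real a * (real k + 1) \<le> (real k + 1 + real a - real h) * (real (card S') + 1)"
              using m1 by (simp add: algebra_simps)
          qed
          then show ?thesis using DevL[OF S'(1) LS'] OwnL[OF S True] iL by simp
        next
          case iL: False
          have c': "real l \<le> real (card S') + 1" using types[OF S'(1)] LS' by auto
          have "real l * (real h - real a) \<le> (real (card S') + 1) * (real h - real a)"
            using c' pos2 by (intro mult_right_mono) auto
          then have m1: "real k * (real k + 1) \<le> (real (card S') + 1) * (real h - real a)"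
            using R2 by linarith
          have m2: "real (h - a) = real h - real a" using ah by (simp add: of_nat_diff)
          have "1 / (real (card S') + 1) \<le> real (h - a) / (real k * (real k + 1))"
          proof (intro frac_le)
            show "0 < real (card S') + 1" by simp
            show "0 < real k * (real k + 1)" using k1 by simp
            show "1 * (real k * (real k + 1)) \<le> real (h - a) * (real (card S') + 1)"
              using m1 m2 by (simp only: mult_1_left) (simp add: algebra_simps)
          qed
          then show ?thesis using DevS[OF S'(1) LS' iS' iL] OwnAs[OF S True iS iL] by simp
        qed
      next
        case False
        have iL: "i \<noteq> L" using False iS by auto
        have own: "shapley h L a S i = 1 / real (card S)" "card S \<le> l" "l - 1 \<le> card S"
          using OwnB[OF S False iS] by auto
        have cpos: "real (card S) > 0" using own hl h3 by simp
        show ?thesis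
        proof (cases "L \<in> S'")
          case True
          have "real (card S) * (real (h - a) + (if Suc k = h then 1 else 0)) \<le> real l * (real (h - a) + (if Suc k = h then 1 else 0))"
            using own(2) by (intro mult_right_mono) auto
          then have m1: "real (card S) * (real (h - a) + (if Suc k = h then 1 else 0)) \<le> (real k + 1) * (real k + 2)"
            using R3 by linarith
          have "(real (h - a) + (if Suc k = h then 1 else 0)) / ((real k + 1) * (real k + 2)) \<le> 1 / real (card S)"
          proof (intro frac_le)
            show "0 < (real k + 1) * (real k + 2)" by simp
            show "0 < real (card S)" by (rule cpos)
            show "(real (h - a) + (if Suc k = h then 1 else 0)) * real (card S) \<le> 1 * ((real k + 1) * (real k + 2))"
              using m1 by (simp add: mult.commute)
          qed
          then show ?thesis using DevA[OF S'(1) True iS'] own(1) by simp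
        next
          case LS': False
          have "l - 1 \<le> card S'" using types[OF S'(1)] LS' by auto
          then have "real (card S) \<le> real (card S') + 1" using own(2) by linarith
          then have "1 / (real (card S') + 1) \<le> 1 / real (card S)" using cpos by (intro frac_le) auto
          then show ?thesis using DevS[OF S'(1) LS' iS' iL] own(1) by simp
        qed
      qed
    qed
    show ?thesis using A B by blast
  qed
  show ?thesis unfolding nash_eq_def using part rhos key by blast
qed

end
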